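(* Let $P$ be a convex pentagon whose sides are parallel to the sides of $K$ (so all its interior angles equal $3\pi/5$), with heights $m_1,\dots,m_5$. If there are indices $i,j$ with $j\equiv i\pm1\pmod 5$ such that $m_i\ge m_l$ and $m_j\ge m_l$ for every $l\notin\{i,j\}$ (i.e. the two largest heights are adjacent), then $P$ is a regular pentagon.
   Context: $K\subset\mathbb R^2$ is the regular pentagon with circumradius $1$, centroid at the origin and $(0,1)$ a vertex; $v_1,\dots,v_5$ are the position vectors of its vertices in counterclockwise order. For a compact convex set $L$, its $i$th height is $m_i=\max_{x\in L}\langle x,v_i\rangle-\min_{x\in L}\langle x,v_i\rangle$. Indices are taken mod $5$. *)

theory Defs
  imports "HOL-Analysis.Analysis"
begin

(* Vertices of K, indexed 0..4 (index k here = index k+1 in the paper);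
   vK 0 = (0,1), counterclockwise, circumradius 1, centroid 0. *)
definition vK :: "nat \<Rightarrow> real^2" where
  "vK k = vector [- sin (2 * pi * real k / 5), cos (2 * pi * real k / 5)]"

definition Kpent :: "(real^2) set" where
  "Kpent = convex hull (vK ` {..<5})"

definition height :: "(real^2) set \<Rightarrow> nat \<Rightarrow> real" where
  "height L i = (SUP x\<in>L. inner x (vK i)) - (INF x\<in>L. inner x (vK i))"

(* Convex pentagon whose sides are parallel to the sides of K, with all interior
   angles 3pi/5: vertices p 0..p 4 in order, the edge p k -> p (k+1) being a positive
   multiple of the edge vK k -> vK (k+1) (s = 1, same orientation as K) or of its
   negative (s = -1, orientation of -K). *)
definition parallel_pentagon :: "(real^2) set \<Rightarrow> bool" where
  "parallel_pentagon P \<longleftrightarrow>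
     (\<exists>p :: nat \<Rightarrow> real^2. \<exists>t :: nat \<Rightarrow> real. \<exists>s :: real.
        (s = 1 \<or> s = -1) \<and>
        (\<forall>k<5. t k > 0 \<and>
            p (Suc k mod 5) - p k = (s * t k) *\<^sub>R (vK (Suc k mod 5) - vK k)) \<and>
        P = convex hull (p ` {..<5}))"

definition regular_pentagon :: "(real^2) set \<Rightarrow> bool" where
  "regular_pentagon P \<longleftrightarrow>
     (\<exists>c :: real^2. \<exists>R \<theta> :: real. R > 0 \<and>
        P = convex hull ((\<lambda>k. c + R *\<^sub>R vector [cos (\<theta> + 2 * pi * real k / 5),
                                                  sin (\<theta> + 2 * pi * real k / 5)]) ` {..<5}))"

end

theory Submission
  imports Defs
begin

definition c1 :: real where "c1 = cos (2*pi/5)"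
definition c2 :: real where "c2 = cos (4*pi/5)"

lemma c1_pos: "0 < c1"
  unfolding c1_def by (rule cos_gt_zero_pi; insert pi_gt_zero; linarith)

lemma c1_lt1: "c1 < 1"
proof -
  have "cos (2*pi/5) < cos 0"
    by (subst cos_mono_less_eq) (use pi_gt_zero in auto)
  thus ?thesis by (simp add: c1_def)
qed

lemma c2_eq: "c2 = 2*c1^2 - 1"
proof -
  have "cos (2*(2*pi/5)) = 2*(cos (2*pi/5))^2 - 1" by (rule cos_double_cos)
  thus ?thesis unfolding c1_def c2_def by simp
qed

lemma c2_eq2: "cos (6*pi/5) = c2"
proof -
  have "cos (6*pi/5) = cos (2*pi - 4*pi/5)" by (simp add: field_simps)
  also have "\<dots> = cos (4*pi/5)" by (rule cos_2pi_minus)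
  finally show ?thesis by (simp add: c2_def)
qed

lemma quad: "4*c1^2 + 2*c1 - 1 = 0"
proof -
  have "cos (3*(2*pi/5)) = 4 * cos (2*pi/5)^3 - 3 * cos (2*pi/5)" by (rule cos_treble_cos)
  moreover have "cos (3*(2*pi/5)) = c2" using c2_eq2 by (simp add: field_simps)
  ultimately have "4*c1^3 - 3*c1 = 2*c1^2 - 1" using c2_eq by (simp add: c1_def)
  hence "(c1 - 1) * (4*c1^2 + 2*c1 - 1) = 0" by (simp add: algebra_simps power2_eq_square power3_eq_cube)
  thus ?thesis using c1_lt1 by simp
qed

lemma c2_lin: "c2 = -1/2 - c1"
  using c2_eq quad by simp

definition cv :: "int \<Rightarrow> real" where
  "cv r = (if r = 0 then 1 else if r = 1 \<or> r = 4 then c1 else c2)"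

lemma cos_small: "r \<in> {0..4} \<Longrightarrow> cos (2*pi*real_of_int r/5) = cv r"
proof -
  assume "r \<in> {0..4}"
  hence "r = 0 \<or> r = 1 \<or> r = 2 \<or> r = 3 \<or> r = 4" by auto
  moreover have "cos (8*pi/5) = c1"
  proof -
    have "cos (8*pi/5) = cos (2*pi - 2*pi/5)" by (simp add: field_simps)
    also have "\<dots> = cos (2*pi/5)" by (rule cos_2pi_minus)
    finally show ?thesis by (simp add: c1_def)
  qed
  ultimately show ?thesis using c2_eq2
    by (auto simp: cv_def c1_def c2_def mult.commute)
qed

lemma cos_int: "cos (2*pi*real_of_int n/5) = cv (n mod 5)"
proof -
  have r: "real_of_int n = 5*real_of_int (n div 5) + real_of_int (n mod 5)"
  proof -
    have "real_of_int (5*(n div 5) + n mod 5) = 5*real_of_int (n div 5) + real_of_int (n mod 5)" by (simp only: of_int_add of_int_mult of_int_numeral)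
    moreover have "5*(n div 5) + n mod 5 = n" by simp
    ultimately show ?thesis by metis
  qed
  have "2*pi*real_of_int n/5 = 2*pi*real_of_int (n mod 5)/5 + (2*pi) * real_of_int (n div 5)"
    by (simp add: r field_simps)
  hence "cos (2*pi*real_of_int n/5) = cos (2*pi*real_of_int (n mod 5)/5 + (2*pi) * real_of_int (n div 5))"
    by (rule arg_cong)
  also have "\<dots> = cos (2*pi*real_of_int (n mod 5)/5)"
    by (simp only: cos_add cos_int_2pin sin_int_2pin)
  also have "\<dots> = cv (n mod 5)" by (rule cos_small) auto
  finally show ?thesis .
qed

lemma inner2: "inner (vector [a, b]) (vector [c, d] :: real^2) = a*c + b*d"
  by (simp add: inner_vec_def sum_2)

lemma innerK: "inner (vK a) (vK b) = cv ((int a - int b) mod 5)"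
proof -
  have "inner (vK a) (vK b) = cos (2*pi*real a/5 - 2*pi*real b/5)"
    by (simp add: vK_def inner2 cos_diff)
  also have "2*pi*real a/5 - 2*pi*real b/5 = 2*pi*real_of_int (int a - int b)/5"
    by (simp add: field_simps)
  finally show ?thesis using cos_int by metis
qed

lemma "inner (vK 3) (vK 1) = c2" by (simp add: innerK cv_def)
lemma "inner (vK 1) (vK 4) = c2" by (simp add: innerK cv_def)

lemma all5: "(\<forall>k<(5::nat). P k) \<longleftrightarrow> P 0 \<and> P 1 \<and> P 2 \<and> P 3 \<and> P 4"
  by (auto simp: numeral_eq_Suc less_Suc_eq)

lemma sup_hull:
  fixes S :: "(real^2) set"
  assumes "a \<in> S" "\<forall>x\<in>S. inner x v \<le> inner a v"
  shows "(SUP x\<in>convex hull S. inner x v) = inner a v"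
proof -
  have sub: "convex hull S \<subseteq> {x. inner v x \<le> inner a v}"
  proof (rule hull_minimal)
    show "convex {x. inner v x \<le> inner a v}" by (rule convex_halfspace_le)
  qed (use assms in \<open>auto simp: inner_commute\<close>)
  show ?thesis
    by (rule cSup_eq_maximum) (use sub assms hull_subset[of S convex] in \<open>auto simp: inner_commute\<close>)
qed

lemma inf_hull:
  fixes S :: "(real^2) set"
  assumes "a \<in> S" "\<forall>x\<in>S. inner a v \<le> inner x v"
  shows "(INF x\<in>convex hull S. inner x v) = inner a v"
proof -
  have sub: "convex hull S \<subseteq> {x. inner v x \<ge> inner a v}"
  proof (rule hull_minimal)
    show "convex {x. inner v x \<ge> inner a v}" by (rule convex_halfspace_ge)
  qed (use assms in \<open>auto simp: inner_commute\<close>)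
  show ?thesis
    by (rule cInf_eq_minimum) (use sub assms hull_subset[of S convex] in \<open>auto simp: inner_commute\<close>)
qed

lemma hgt:
  fixes p :: "nat \<Rightarrow> real^2"
  assumes "P = convex hull (p ` {..<5})" "a<5" "b<5"
    "\<forall>k<5. inner (p k) (vK l) \<le> inner (p a) (vK l) \<and> inner (p b) (vK l) \<le> inner (p k) (vK l)"
  shows "height P l = inner (p a) (vK l) - inner (p b) (vK l)"
proof -
  have "(SUP x\<in>P. inner x (vK l)) = inner (p a) (vK l)"
    unfolding assms(1) by (rule sup_hull) (use assms in auto)
  moreover have "(INF x\<in>P. inner x (vK l)) = inner (p b) (vK l)"
    unfolding assms(1) by (rule inf_hull) (use assms in auto)
  ultimately show ?thesis by (simp add: height_def)
qed

definition dA :: real where "dA = 1 - c1"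
definition dB :: real where "dB = 1/2 + 2*c1"

lemma dA_pos: "0 < dA" using c1_lt1 by (simp add: dA_def)
lemma dB_pos: "0 < dB" using c1_pos by (simp add: dB_def)

lemma heights:
  fixes p :: "nat \<Rightarrow> real^2"
  assumes s: "s = 1 \<or> s = -1"
    and e: "\<forall>k<5. t k > 0 \<and> p (Suc k mod 5) - p k = (s * t k) *\<^sub>R (vK (Suc k mod 5) - vK k)"
    and P: "P = convex hull (p ` {..<5})" and l: "l<5"
  shows "height P l = t l * dA + t (Suc l mod 5) * dB"
proof -
  have E: "inner (p k') (vK l) = inner (p k) (vK l) + s*t k*(inner (vK k') (vK l) - inner (vK k) (vK l))"
    if "k<5" "k' = Suc k mod 5" for k k'
  proof -
    have "p k' - p k = (s * t k) *\<^sub>R (vK k' - vK k)" using e that by blast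
    hence "inner (p k' - p k) (vK l) = inner ((s * t k) *\<^sub>R (vK k' - vK k)) (vK l)" by (rule arg_cong)
    thus ?thesis by (simp only: inner_diff_left inner_scaleR_left)
  qed
  have E0: "inner (p 1) (vK l) = inner (p 0) (vK l) + s*t 0*(inner (vK 1) (vK l) - inner (vK 0) (vK l))" by (rule E[of 0]) simp_all
  have E1: "inner (p 2) (vK l) = inner (p 1) (vK l) + s*t 1*(inner (vK 2) (vK l) - inner (vK 1) (vK l))" by (rule E[of 1]) simp_all
  have E2: "inner (p 3) (vK l) = inner (p 2) (vK l) + s*t 2*(inner (vK 3) (vK l) - inner (vK 2) (vK l))" by (rule E[of 2]) simp_all
  have E3: "inner (p 4) (vK l) = inner (p 3) (vK l) + s*t 3*(inner (vK 4) (vK l) - inner (vK 3) (vK l))" by (rule E[of 3]) simp_all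
  have E4: "inner (p 0) (vK l) = inner (p 4) (vK l) + s*t 4*(inner (vK 0) (vK l) - inner (vK 4) (vK l))" by (rule E[of 4]) simp_all
  have tp: "0 < t k * dA" "0 < t k * dB" if "k<5" for k
  proof -
    have "0 < t k" using e that by blast
    thus "0 < t k * dA" "0 < t k * dB" using dA_pos dB_pos by simp_all
  qed
  have pos: "0 < t 0 * dA" "0 < t 0 * dB" "0 < t 1 * dA" "0 < t 1 * dB" "0 < t 2 * dA" "0 < t 2 * dB" "0 < t 3 * dA" "0 < t 3 * dB" "0 < t 4 * dA" "0 < t 4 * dB"
    by (rule tp; simp)+
  have "l = 0 \<or> l = 1 \<or> l = 2 \<or> l = 3 \<or> l = 4" using l by auto
  then show ?thesis
  proof (elim disjE)
    assume lL: "l = 0"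
    { assume sS: "s = 1"
      have G: "inner (p 1) (vK 0) = inner (p 0) (vK 0) - t 0 * dA" "inner (p 2) (vK 0) = inner (p 1) (vK 0) - t 1 * dB" "inner (p 3) (vK 0) = inner (p 2) (vK 0) " "inner (p 4) (vK 0) = inner (p 3) (vK 0) + t 3 * dB"
        using E0 E1 E2 E3 E4 lL sS by (simp_all add: innerK cv_def c2_lin dA_def dB_def algebra_simps)
      have Gw: "inner (p 0) (vK 0) = inner (p 4) (vK 0) + t 4 * dA"
        using E0 E1 E2 E3 E4 lL sS by (simp_all add: innerK cv_def c2_lin dA_def dB_def algebra_simps)
      have "height P 0 = inner (p 0) (vK 0) - inner (p 2) (vK 0)"
      proof (rule hgt[OF P])
        show "\<forall>k<5. inner (p k) (vK 0) \<le> inner (p 0) (vK 0) \<and> inner (p 2) (vK 0) \<le> inner (p k) (vK 0)"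
          unfolding all5 using pos Gw by (simp only: G; intro conjI; linarith)
      qed simp_all
      moreover have "inner (p 0) (vK 0) - inner (p 2) (vK 0) = t 0 * dA + t 1 * dB"
        using Gw by (simp only: G; linarith)
      moreover have lS: "Suc l mod 5 = 1" using lL by simp
      ultimately have "height P l = t l * dA + t (Suc l mod 5) * dB" unfolding lS unfolding lL by simp
    }
    moreover
    { assume sS: "s = -1"
      have G: "inner (p 1) (vK 0) = inner (p 0) (vK 0) + t 0 * dA" "inner (p 2) (vK 0) = inner (p 1) (vK 0) + t 1 * dB" "inner (p 3) (vK 0) = inner (p 2) (vK 0) " "inner (p 4) (vK 0) = inner (p 3) (vK 0) - t 3 * dB"
        using E0 E1 E2 E3 E4 lL sS by (simp_all add: innerK cv_def c2_lin dA_def dB_def algebra_simps)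
      have Gw: "inner (p 0) (vK 0) = inner (p 4) (vK 0) - t 4 * dA"
        using E0 E1 E2 E3 E4 lL sS by (simp_all add: innerK cv_def c2_lin dA_def dB_def algebra_simps)
      have "height P 0 = inner (p 2) (vK 0) - inner (p 0) (vK 0)"
      proof (rule hgt[OF P])
        show "\<forall>k<5. inner (p k) (vK 0) \<le> inner (p 2) (vK 0) \<and> inner (p 0) (vK 0) \<le> inner (p k) (vK 0)"
          unfolding all5 using pos Gw by (simp only: G; intro conjI; linarith)
      qed simp_all
      moreover have "inner (p 2) (vK 0) - inner (p 0) (vK 0) = t 0 * dA + t 1 * dB"
        using Gw by (simp only: G; linarith)
      moreover have lS: "Suc l mod 5 = 1" using lL by simp
      ultimately have "height P l = t l * dA + t (Suc l mod 5) * dB" unfolding lS unfolding lL by simp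
    }
    ultimately show ?thesis using s by blast
  next
    assume lL: "l = 1"
    { assume sS: "s = 1"
      have G: "inner (p 2) (vK 1) = inner (p 1) (vK 1) - t 1 * dA" "inner (p 3) (vK 1) = inner (p 2) (vK 1) - t 2 * dB" "inner (p 4) (vK 1) = inner (p 3) (vK 1) " "inner (p 0) (vK 1) = inner (p 4) (vK 1) + t 4 * dB"
        using E0 E1 E2 E3 E4 lL sS by (simp_all add: innerK cv_def c2_lin dA_def dB_def algebra_simps)
      have Gw: "inner (p 1) (vK 1) = inner (p 0) (vK 1) + t 0 * dA"
        using E0 E1 E2 E3 E4 lL sS by (simp_all add: innerK cv_def c2_lin dA_def dB_def algebra_simps)
      have "height P 1 = inner (p 1) (vK 1) - inner (p 3) (vK 1)"
      proof (rule hgt[OF P])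
        show "\<forall>k<5. inner (p k) (vK 1) \<le> inner (p 1) (vK 1) \<and> inner (p 3) (vK 1) \<le> inner (p k) (vK 1)"
          unfolding all5 using pos Gw by (simp only: G; intro conjI; linarith)
      qed simp_all
      moreover have "inner (p 1) (vK 1) - inner (p 3) (vK 1) = t 1 * dA + t 2 * dB"
        using Gw by (simp only: G; linarith)
      moreover have lS: "Suc l mod 5 = 2" using lL by simp
      ultimately have "height P l = t l * dA + t (Suc l mod 5) * dB" unfolding lS unfolding lL by simp
    }
    moreover
    { assume sS: "s = -1"
      have G: "inner (p 2) (vK 1) = inner (p 1) (vK 1) + t 1 * dA" "inner (p 3) (vK 1) = inner (p 2) (vK 1) + t 2 * dB" "inner (p 4) (vK 1) = inner (p 3) (vK 1) " "inner (p 0) (vK 1) = inner (p 4) (vK 1) - t 4 * dB"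
        using E0 E1 E2 E3 E4 lL sS by (simp_all add: innerK cv_def c2_lin dA_def dB_def algebra_simps)
      have Gw: "inner (p 1) (vK 1) = inner (p 0) (vK 1) - t 0 * dA"
        using E0 E1 E2 E3 E4 lL sS by (simp_all add: innerK cv_def c2_lin dA_def dB_def algebra_simps)
      have "height P 1 = inner (p 3) (vK 1) - inner (p 1) (vK 1)"
      proof (rule hgt[OF P])
        show "\<forall>k<5. inner (p k) (vK 1) \<le> inner (p 3) (vK 1) \<and> inner (p 1) (vK 1) \<le> inner (p k) (vK 1)"
          unfolding all5 using pos Gw by (simp only: G; intro conjI; linarith)
      qed simp_all
      moreover have "inner (p 3) (vK 1) - inner (p 1) (vK 1) = t 1 * dA + t 2 * dB"
        using Gw by (simp only: G; linarith)
      moreover have lS: "Suc l mod 5 = 2" using lL by simp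
      ultimately have "height P l = t l * dA + t (Suc l mod 5) * dB" unfolding lS unfolding lL by simp
    }
    ultimately show ?thesis using s by blast
  next
    assume lL: "l = 2"
    { assume sS: "s = 1"
      have G: "inner (p 1) (vK 2) = inner (p 0) (vK 2) + t 0 * dB" "inner (p 3) (vK 2) = inner (p 2) (vK 2) - t 2 * dA" "inner (p 4) (vK 2) = inner (p 3) (vK 2) - t 3 * dB" "inner (p 0) (vK 2) = inner (p 4) (vK 2) "
        using E0 E1 E2 E3 E4 lL sS by (simp_all add: innerK cv_def c2_lin dA_def dB_def algebra_simps)
      have Gw: "inner (p 2) (vK 2) = inner (p 1) (vK 2) + t 1 * dA"
        using E0 E1 E2 E3 E4 lL sS by (simp_all add: innerK cv_def c2_lin dA_def dB_def algebra_simps)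
      have "height P 2 = inner (p 2) (vK 2) - inner (p 4) (vK 2)"
      proof (rule hgt[OF P])
        show "\<forall>k<5. inner (p k) (vK 2) \<le> inner (p 2) (vK 2) \<and> inner (p 4) (vK 2) \<le> inner (p k) (vK 2)"
          unfolding all5 using pos Gw by (simp only: G; intro conjI; linarith)
      qed simp_all
      moreover have "inner (p 2) (vK 2) - inner (p 4) (vK 2) = t 2 * dA + t 3 * dB"
        using Gw by (simp only: G; linarith)
      moreover have lS: "Suc l mod 5 = 3" using lL by simp
      ultimately have "height P l = t l * dA + t (Suc l mod 5) * dB" unfolding lS unfolding lL by simp
    }
    moreover
    { assume sS: "s = -1"
      have G: "inner (p 1) (vK 2) = inner (p 0) (vK 2) - t 0 * dB" "inner (p 3) (vK 2) = inner (p 2) (vK 2) + t 2 * dA" "inner (p 4) (vK 2) = inner (p 3) (vK 2) + t 3 * dB" "inner (p 0) (vK 2) = inner (p 4) (vK 2) "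
        using E0 E1 E2 E3 E4 lL sS by (simp_all add: innerK cv_def c2_lin dA_def dB_def algebra_simps)
      have Gw: "inner (p 2) (vK 2) = inner (p 1) (vK 2) - t 1 * dA"
        using E0 E1 E2 E3 E4 lL sS by (simp_all add: innerK cv_def c2_lin dA_def dB_def algebra_simps)
      have "height P 2 = inner (p 4) (vK 2) - inner (p 2) (vK 2)"
      proof (rule hgt[OF P])
        show "\<forall>k<5. inner (p k) (vK 2) \<le> inner (p 4) (vK 2) \<and> inner (p 2) (vK 2) \<le> inner (p k) (vK 2)"
          unfolding all5 using pos Gw by (simp only: G; intro conjI; linarith)
      qed simp_all
      moreover have "inner (p 4) (vK 2) - inner (p 2) (vK 2) = t 2 * dA + t 3 * dB"
        using Gw by (simp only: G; linarith)
      moreover have lS: "Suc l mod 5 = 3" using lL by simp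
      ultimately have "height P l = t l * dA + t (Suc l mod 5) * dB" unfolding lS unfolding lL by simp
    }
    ultimately show ?thesis using s by blast
  next
    assume lL: "l = 3"
    { assume sS: "s = 1"
      have G: "inner (p 1) (vK 3) = inner (p 0) (vK 3) " "inner (p 2) (vK 3) = inner (p 1) (vK 3) + t 1 * dB" "inner (p 4) (vK 3) = inner (p 3) (vK 3) - t 3 * dA" "inner (p 0) (vK 3) = inner (p 4) (vK 3) - t 4 * dB"
        using E0 E1 E2 E3 E4 lL sS by (simp_all add: innerK cv_def c2_lin dA_def dB_def algebra_simps)
      have Gw: "inner (p 3) (vK 3) = inner (p 2) (vK 3) + t 2 * dA"
        using E0 E1 E2 E3 E4 lL sS by (simp_all add: innerK cv_def c2_lin dA_def dB_def algebra_simps)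
      have "height P 3 = inner (p 3) (vK 3) - inner (p 0) (vK 3)"
      proof (rule hgt[OF P])
        show "\<forall>k<5. inner (p k) (vK 3) \<le> inner (p 3) (vK 3) \<and> inner (p 0) (vK 3) \<le> inner (p k) (vK 3)"
          unfolding all5 using pos Gw by (simp only: G; intro conjI; linarith)
      qed simp_all
      moreover have "inner (p 3) (vK 3) - inner (p 0) (vK 3) = t 3 * dA + t 4 * dB"
        using Gw by (simp only: G; linarith)
      moreover have lS: "Suc l mod 5 = 4" using lL by simp
      ultimately have "height P l = t l * dA + t (Suc l mod 5) * dB" unfolding lS unfolding lL by simp
    }
    moreover
    { assume sS: "s = -1"
      have G: "inner (p 1) (vK 3) = inner (p 0) (vK 3) " "inner (p 2) (vK 3) = inner (p 1) (vK 3) - t 1 * dB" "inner (p 4) (vK 3) = inner (p 3) (vK 3) + t 3 * dA" "inner (p 0) (vK 3) = inner (p 4) (vK 3) + t 4 * dB"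
        using E0 E1 E2 E3 E4 lL sS by (simp_all add: innerK cv_def c2_lin dA_def dB_def algebra_simps)
      have Gw: "inner (p 3) (vK 3) = inner (p 2) (vK 3) - t 2 * dA"
        using E0 E1 E2 E3 E4 lL sS by (simp_all add: innerK cv_def c2_lin dA_def dB_def algebra_simps)
      have "height P 3 = inner (p 0) (vK 3) - inner (p 3) (vK 3)"
      proof (rule hgt[OF P])
        show "\<forall>k<5. inner (p k) (vK 3) \<le> inner (p 0) (vK 3) \<and> inner (p 3) (vK 3) \<le> inner (p k) (vK 3)"
          unfolding all5 using pos Gw by (simp only: G; intro conjI; linarith)
      qed simp_all
      moreover have "inner (p 0) (vK 3) - inner (p 3) (vK 3) = t 3 * dA + t 4 * dB"
        using Gw by (simp only: G; linarith)
      moreover have lS: "Suc l mod 5 = 4" using lL by simp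
      ultimately have "height P l = t l * dA + t (Suc l mod 5) * dB" unfolding lS unfolding lL by simp
    }
    ultimately show ?thesis using s by blast
  next
    assume lL: "l = 4"
    { assume sS: "s = 1"
      have G: "inner (p 1) (vK 4) = inner (p 0) (vK 4) - t 0 * dB" "inner (p 2) (vK 4) = inner (p 1) (vK 4) " "inner (p 3) (vK 4) = inner (p 2) (vK 4) + t 2 * dB" "inner (p 0) (vK 4) = inner (p 4) (vK 4) - t 4 * dA"
        using E0 E1 E2 E3 E4 lL sS by (simp_all add: innerK cv_def c2_lin dA_def dB_def algebra_simps)
      have Gw: "inner (p 4) (vK 4) = inner (p 3) (vK 4) + t 3 * dA"
        using E0 E1 E2 E3 E4 lL sS by (simp_all add: innerK cv_def c2_lin dA_def dB_def algebra_simps)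
      have "height P 4 = inner (p 4) (vK 4) - inner (p 1) (vK 4)"
      proof (rule hgt[OF P])
        show "\<forall>k<5. inner (p k) (vK 4) \<le> inner (p 4) (vK 4) \<and> inner (p 1) (vK 4) \<le> inner (p k) (vK 4)"
          unfolding all5 using pos Gw by (simp only: G; intro conjI; linarith)
      qed simp_all
      moreover have "inner (p 4) (vK 4) - inner (p 1) (vK 4) = t 4 * dA + t 0 * dB"
        using Gw by (simp only: G; linarith)
      moreover have lS: "Suc l mod 5 = 0" using lL by simp
      ultimately have "height P l = t l * dA + t (Suc l mod 5) * dB" unfolding lS unfolding lL by simp
    }
    moreover
    { assume sS: "s = -1"
      have G: "inner (p 1) (vK 4) = inner (p 0) (vK 4) + t 0 * dB" "inner (p 2) (vK 4) = inner (p 1) (vK 4) " "inner (p 3) (vK 4) = inner (p 2) (vK 4) - t 2 * dB" "inner (p 0) (vK 4) = inner (p 4) (vK 4) + t 4 * dA"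
        using E0 E1 E2 E3 E4 lL sS by (simp_all add: innerK cv_def c2_lin dA_def dB_def algebra_simps)
      have Gw: "inner (p 4) (vK 4) = inner (p 3) (vK 4) - t 3 * dA"
        using E0 E1 E2 E3 E4 lL sS by (simp_all add: innerK cv_def c2_lin dA_def dB_def algebra_simps)
      have "height P 4 = inner (p 1) (vK 4) - inner (p 4) (vK 4)"
      proof (rule hgt[OF P])
        show "\<forall>k<5. inner (p k) (vK 4) \<le> inner (p 1) (vK 4) \<and> inner (p 4) (vK 4) \<le> inner (p k) (vK 4)"
          unfolding all5 using pos Gw by (simp only: G; intro conjI; linarith)
      qed simp_all
      moreover have "inner (p 1) (vK 4) - inner (p 4) (vK 4) = t 4 * dA + t 0 * dB"
        using Gw by (simp only: G; linarith)
      moreover have lS: "Suc l mod 5 = 0" using lL by simp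
      ultimately have "height P l = t l * dA + t (Suc l mod 5) * dB" unfolding lS unfolding lL by simp
    }
    ultimately show ?thesis using s by blast
  qed
qed

lemma core:
  fixes a b t0 t1 t2 t3 t4 :: real
  assumes a: "0 < a" and b: "b = 5/2 - 2*a" "0 < b" and q: "4*a^2 - 10*a + 5 = 0"
  and cl0': "t0*a - t4*a + t1*b - t3*b = 0"
  and cl1': "t1*a - t0*a + t2*b - t4*b = 0"
  and h02: "t2*a + t3*b \<le> t0*a + t1*b"
  and h03: "t3*a + t4*b \<le> t0*a + t1*b"
  and h04: "t4*a + t0*b \<le> t0*a + t1*b"
  and h12: "t2*a + t3*b \<le> t1*a + t2*b"
  and h13: "t3*a + t4*b \<le> t1*a + t2*b"
  and h14: "t4*a + t0*b \<le> t1*a + t2*b"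
  shows "t1 = t0 \<and> t2 = t0 \<and> t3 = t0 \<and> t4 = t0"
proof -
  have cl0: "a*(t0 - t4) + b*(t1 - t3) = 0" using cl0' by (simp add: algebra_simps)
  have cl1: "a*(t1 - t0) + b*(t2 - t4) = 0" using cl1' by (simp add: algebra_simps)
  define F0 where "F0 = t0*a + t1*b"
  define F1 where "F1 = t1*a + t2*b"
  define F2 where "F2 = t2*a + t3*b"
  define F3 where "F3 = t3*a + t4*b"
  define F4 where "F4 = t4*a + t0*b"
  have id: "a*((F0-F2)+(F1-F4)) + b*((F0-F3)+(F1-F3)) = 3*a*(a*(t0 - t4) + b*(t1 - t3)) + 2*a*(a*(t1 - t0) + b*(t2 - t4))"
    unfolding F0_def F1_def F2_def F3_def F4_def using b(1) q by algebra
  hence z: "a*((F0-F2)+(F1-F4)) + b*((F0-F3)+(F1-F3)) = 0"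
    using cl0 cl1 by simp
  have "a*((F0-F2)+(F1-F4)) = a*(F0-F2) + a*(F1-F4)" by (rule distrib_left)
  moreover have "b*((F0-F3)+(F1-F3)) = b*(F0-F3) + b*(F1-F3)" by (rule distrib_left)
  ultimately have sum0: "a*(F0-F2) + a*(F1-F4) + b*(F0-F3) + b*(F1-F3) = 0"
    using z by linarith
  have n1: "0 \<le> a*(F0-F2)" using a h02 unfolding F0_def F2_def by simp
  have n2: "0 \<le> a*(F1-F4)" using a h14 unfolding F1_def F4_def by simp
  have n3: "0 \<le> b*(F0-F3)" using b h03 unfolding F0_def F3_def by simp
  have n4: "0 \<le> b*(F1-F3)" using b h13 unfolding F1_def F3_def by simp
  have "a*(F0-F2) = 0" "a*(F1-F4) = 0" "b*(F0-F3) = 0" "b*(F1-F3) = 0"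
    using sum0 n1 n2 n3 n4 by linarith+
  hence e: "F0 = F2" "F1 = F4" "F0 = F3" "F1 = F3" using a b by auto
  define r where "r = a/b"
  have rp: "0 < r" using a b by (simp add: r_def)
  define d0 where "d0 = t0 - t1"
  define d1 where "d1 = t1 - t2"
  define d2 where "d2 = t2 - t3"
  define d3 where "d3 = t3 - t4"
  define d4 where "d4 = t4 - t0"
  have step: "y = -r*x" if "a*x + b*y = 0" for x y
  proof -
    have "b*y = -a*x" using that by linarith
    thus ?thesis using b(2) unfolding r_def by (simp add: field_simps)
  qed
  have s0: "d1 = -r*d0" by (rule step) (use e in \<open>simp add: d0_def d1_def F0_def F1_def F2_def F3_def F4_def algebra_simps\<close>)
  have s1: "d2 = -r*d1" by (rule step) (use e in \<open>simp add: d2_def d1_def F0_def F1_def F2_def F3_def F4_def algebra_simps\<close>)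
  have s2: "d3 = -r*d2" by (rule step) (use e in \<open>simp add: d2_def d3_def F0_def F1_def F2_def F3_def F4_def algebra_simps\<close>)
  have s3: "d4 = -r*d3" by (rule step) (use e in \<open>simp add: d4_def d3_def F0_def F1_def F2_def F3_def F4_def algebra_simps\<close>)
  have s4: "d0 = -r*d4" by (rule step) (use e in \<open>simp add: d4_def d0_def F0_def F1_def F2_def F3_def F4_def algebra_simps\<close>)
  have "d0 = -r*d4" by (rule s4)
  also have "\<dots> = -r*(-r*d3)" by (simp only: s3)
  also have "\<dots> = -r*(-r*(-r*d2))" by (simp only: s2)
  also have "\<dots> = -r*(-r*(-r*(-r*d1)))" by (simp only: s1)
  also have "\<dots> = -r*(-r*(-r*(-r*(-r*d0))))" by (simp only: s0)
  also have "\<dots> = -(r^5)*d0" by algebra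
  finally have "d0 = -(r^5)*d0" .
  hence "(1 + r^5) * d0 = 0" by (simp add: algebra_simps)
  moreover have "0 < 1 + r^5" using rp by (simp add: add_pos_pos)
  ultimately have "d0 = 0" by simp
  hence "d1 = 0" "d2 = 0" "d3 = 0" using s0 s1 s2 by simp_all
  thus ?thesis using \<open>d0 = 0\<close> unfolding d0_def d1_def d2_def d3_def by linarith
qed

lemma closure:
  fixes p :: "nat \<Rightarrow> real^2"
  assumes s: "s = 1 \<or> s = -1"
    and e: "\<forall>k<5. t k > 0 \<and> p (Suc k mod 5) - p k = (s * t k) *\<^sub>R (vK (Suc k mod 5) - vK k)"
  shows "t 0 * dA - t 4 * dA + t 1 * dB - t 3 * dB = 0" "t 1 * dA - t 0 * dA + t 2 * dB - t 4 * dB = 0" "t 2 * dA - t 1 * dA + t 3 * dB - t 0 * dB = 0" "t 3 * dA - t 2 * dA + t 4 * dB - t 1 * dB = 0" "t 4 * dA - t 3 * dA + t 0 * dB - t 2 * dB = 0"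
proof -
  have E: "inner (p k') (vK l) = inner (p k) (vK l) + s*t k*(inner (vK k') (vK l) - inner (vK k) (vK l))"
    if "k<5" "k' = Suc k mod 5" for k k' l
  proof -
    have "p k' - p k = (s * t k) *\<^sub>R (vK k' - vK k)" using e that by blast
    hence "inner (p k' - p k) (vK l) = inner ((s * t k) *\<^sub>R (vK k' - vK k)) (vK l)" by (rule arg_cong)
    thus ?thesis by (simp only: inner_diff_left inner_scaleR_left)
  qed
  have E0_0: "inner (p 1) (vK 0) = inner (p 0) (vK 0) + s*t 0*(inner (vK 1) (vK 0) - inner (vK 0) (vK 0))" by (rule E[of 0]) simp_all
  have E1_0: "inner (p 2) (vK 0) = inner (p 1) (vK 0) + s*t 1*(inner (vK 2) (vK 0) - inner (vK 1) (vK 0))" by (rule E[of 1]) simp_all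
  have E2_0: "inner (p 3) (vK 0) = inner (p 2) (vK 0) + s*t 2*(inner (vK 3) (vK 0) - inner (vK 2) (vK 0))" by (rule E[of 2]) simp_all
  have E3_0: "inner (p 4) (vK 0) = inner (p 3) (vK 0) + s*t 3*(inner (vK 4) (vK 0) - inner (vK 3) (vK 0))" by (rule E[of 3]) simp_all
  have E4_0: "inner (p 0) (vK 0) = inner (p 4) (vK 0) + s*t 4*(inner (vK 0) (vK 0) - inner (vK 4) (vK 0))" by (rule E[of 4]) simp_all
  have E0_1: "inner (p 1) (vK 1) = inner (p 0) (vK 1) + s*t 0*(inner (vK 1) (vK 1) - inner (vK 0) (vK 1))" by (rule E[of 0]) simp_all
  have E1_1: "inner (p 2) (vK 1) = inner (p 1) (vK 1) + s*t 1*(inner (vK 2) (vK 1) - inner (vK 1) (vK 1))" by (rule E[of 1]) simp_all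
  have E2_1: "inner (p 3) (vK 1) = inner (p 2) (vK 1) + s*t 2*(inner (vK 3) (vK 1) - inner (vK 2) (vK 1))" by (rule E[of 2]) simp_all
  have E3_1: "inner (p 4) (vK 1) = inner (p 3) (vK 1) + s*t 3*(inner (vK 4) (vK 1) - inner (vK 3) (vK 1))" by (rule E[of 3]) simp_all
  have E4_1: "inner (p 0) (vK 1) = inner (p 4) (vK 1) + s*t 4*(inner (vK 0) (vK 1) - inner (vK 4) (vK 1))" by (rule E[of 4]) simp_all
  have E0_2: "inner (p 1) (vK 2) = inner (p 0) (vK 2) + s*t 0*(inner (vK 1) (vK 2) - inner (vK 0) (vK 2))" by (rule E[of 0]) simp_all
  have E1_2: "inner (p 2) (vK 2) = inner (p 1) (vK 2) + s*t 1*(inner (vK 2) (vK 2) - inner (vK 1) (vK 2))" by (rule E[of 1]) simp_all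
  have E2_2: "inner (p 3) (vK 2) = inner (p 2) (vK 2) + s*t 2*(inner (vK 3) (vK 2) - inner (vK 2) (vK 2))" by (rule E[of 2]) simp_all
  have E3_2: "inner (p 4) (vK 2) = inner (p 3) (vK 2) + s*t 3*(inner (vK 4) (vK 2) - inner (vK 3) (vK 2))" by (rule E[of 3]) simp_all
  have E4_2: "inner (p 0) (vK 2) = inner (p 4) (vK 2) + s*t 4*(inner (vK 0) (vK 2) - inner (vK 4) (vK 2))" by (rule E[of 4]) simp_all
  have E0_3: "inner (p 1) (vK 3) = inner (p 0) (vK 3) + s*t 0*(inner (vK 1) (vK 3) - inner (vK 0) (vK 3))" by (rule E[of 0]) simp_all
  have E1_3: "inner (p 2) (vK 3) = inner (p 1) (vK 3) + s*t 1*(inner (vK 2) (vK 3) - inner (vK 1) (vK 3))" by (rule E[of 1]) simp_all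
  have E2_3: "inner (p 3) (vK 3) = inner (p 2) (vK 3) + s*t 2*(inner (vK 3) (vK 3) - inner (vK 2) (vK 3))" by (rule E[of 2]) simp_all
  have E3_3: "inner (p 4) (vK 3) = inner (p 3) (vK 3) + s*t 3*(inner (vK 4) (vK 3) - inner (vK 3) (vK 3))" by (rule E[of 3]) simp_all
  have E4_3: "inner (p 0) (vK 3) = inner (p 4) (vK 3) + s*t 4*(inner (vK 0) (vK 3) - inner (vK 4) (vK 3))" by (rule E[of 4]) simp_all
  have E0_4: "inner (p 1) (vK 4) = inner (p 0) (vK 4) + s*t 0*(inner (vK 1) (vK 4) - inner (vK 0) (vK 4))" by (rule E[of 0]) simp_all
  have E1_4: "inner (p 2) (vK 4) = inner (p 1) (vK 4) + s*t 1*(inner (vK 2) (vK 4) - inner (vK 1) (vK 4))" by (rule E[of 1]) simp_all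
  have E2_4: "inner (p 3) (vK 4) = inner (p 2) (vK 4) + s*t 2*(inner (vK 3) (vK 4) - inner (vK 2) (vK 4))" by (rule E[of 2]) simp_all
  have E3_4: "inner (p 4) (vK 4) = inner (p 3) (vK 4) + s*t 3*(inner (vK 4) (vK 4) - inner (vK 3) (vK 4))" by (rule E[of 3]) simp_all
  have E4_4: "inner (p 0) (vK 4) = inner (p 4) (vK 4) + s*t 4*(inner (vK 0) (vK 4) - inner (vK 4) (vK 4))" by (rule E[of 4]) simp_all
  have G0: "inner (p 1) (vK 0) = inner (p 0) (vK 0) + s * (0 - t 0 * dA)" "inner (p 2) (vK 0) = inner (p 1) (vK 0) + s * (0 - t 1 * dB)" "inner (p 3) (vK 0) = inner (p 2) (vK 0) + s * (0 )" "inner (p 4) (vK 0) = inner (p 3) (vK 0) + s * (0 + t 3 * dB)"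
    using E0_0 E1_0 E2_0 E3_0 E4_0 by (simp_all add: innerK cv_def c2_lin dA_def dB_def algebra_simps)
  have Gw0: "inner (p 0) (vK 0) = inner (p 4) (vK 0) + s * (0 + t 4 * dA)"
    using E0_0 E1_0 E2_0 E3_0 E4_0 by (simp_all add: innerK cv_def c2_lin dA_def dB_def algebra_simps)
  have C0: "s * (t 0 * dA - t 4 * dA + t 1 * dB - t 3 * dB) = 0"
    using Gw0 by (simp only: G0; simp add: algebra_simps)
  have G1: "inner (p 2) (vK 1) = inner (p 1) (vK 1) + s * (0 - t 1 * dA)" "inner (p 3) (vK 1) = inner (p 2) (vK 1) + s * (0 - t 2 * dB)" "inner (p 4) (vK 1) = inner (p 3) (vK 1) + s * (0 )" "inner (p 0) (vK 1) = inner (p 4) (vK 1) + s * (0 + t 4 * dB)"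
    using E0_1 E1_1 E2_1 E3_1 E4_1 by (simp_all add: innerK cv_def c2_lin dA_def dB_def algebra_simps)
  have Gw1: "inner (p 1) (vK 1) = inner (p 0) (vK 1) + s * (0 + t 0 * dA)"
    using E0_1 E1_1 E2_1 E3_1 E4_1 by (simp_all add: innerK cv_def c2_lin dA_def dB_def algebra_simps)
  have C1: "s * (t 1 * dA - t 0 * dA + t 2 * dB - t 4 * dB) = 0"
    using Gw1 by (simp only: G1; simp add: algebra_simps)
  have G2: "inner (p 1) (vK 2) = inner (p 0) (vK 2) + s * (0 + t 0 * dB)" "inner (p 3) (vK 2) = inner (p 2) (vK 2) + s * (0 - t 2 * dA)" "inner (p 4) (vK 2) = inner (p 3) (vK 2) + s * (0 - t 3 * dB)" "inner (p 0) (vK 2) = inner (p 4) (vK 2) + s * (0 )"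
    using E0_2 E1_2 E2_2 E3_2 E4_2 by (simp_all add: innerK cv_def c2_lin dA_def dB_def algebra_simps)
  have Gw2: "inner (p 2) (vK 2) = inner (p 1) (vK 2) + s * (0 + t 1 * dA)"
    using E0_2 E1_2 E2_2 E3_2 E4_2 by (simp_all add: innerK cv_def c2_lin dA_def dB_def algebra_simps)
  have C2: "s * (t 2 * dA - t 1 * dA + t 3 * dB - t 0 * dB) = 0"
    using Gw2 by (simp only: G2; simp add: algebra_simps)
  have G3: "inner (p 1) (vK 3) = inner (p 0) (vK 3) + s * (0 )" "inner (p 2) (vK 3) = inner (p 1) (vK 3) + s * (0 + t 1 * dB)" "inner (p 4) (vK 3) = inner (p 3) (vK 3) + s * (0 - t 3 * dA)" "inner (p 0) (vK 3) = inner (p 4) (vK 3) + s * (0 - t 4 * dB)"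
    using E0_3 E1_3 E2_3 E3_3 E4_3 by (simp_all add: innerK cv_def c2_lin dA_def dB_def algebra_simps)
  have Gw3: "inner (p 3) (vK 3) = inner (p 2) (vK 3) + s * (0 + t 2 * dA)"
    using E0_3 E1_3 E2_3 E3_3 E4_3 by (simp_all add: innerK cv_def c2_lin dA_def dB_def algebra_simps)
  have C3: "s * (t 3 * dA - t 2 * dA + t 4 * dB - t 1 * dB) = 0"
    using Gw3 by (simp only: G3; simp add: algebra_simps)
  have G4: "inner (p 1) (vK 4) = inner (p 0) (vK 4) + s * (0 - t 0 * dB)" "inner (p 2) (vK 4) = inner (p 1) (vK 4) + s * (0 )" "inner (p 3) (vK 4) = inner (p 2) (vK 4) + s * (0 + t 2 * dB)" "inner (p 0) (vK 4) = inner (p 4) (vK 4) + s * (0 - t 4 * dA)"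
    using E0_4 E1_4 E2_4 E3_4 E4_4 by (simp_all add: innerK cv_def c2_lin dA_def dB_def algebra_simps)
  have Gw4: "inner (p 4) (vK 4) = inner (p 3) (vK 4) + s * (0 + t 3 * dA)"
    using E0_4 E1_4 E2_4 E3_4 E4_4 by (simp_all add: innerK cv_def c2_lin dA_def dB_def algebra_simps)
  have C4: "s * (t 4 * dA - t 3 * dA + t 0 * dB - t 2 * dB) = 0"
    using Gw4 by (simp only: G4; simp add: algebra_simps)
  have sn: "s \<noteq> 0" using s by auto
  show "t 0 * dA - t 4 * dA + t 1 * dB - t 3 * dB = 0" "t 1 * dA - t 0 * dA + t 2 * dB - t 4 * dB = 0" "t 2 * dA - t 1 * dA + t 3 * dB - t 0 * dB = 0" "t 3 * dA - t 2 * dA + t 4 * dB - t 1 * dB = 0" "t 4 * dA - t 3 * dA + t 0 * dB - t 2 * dB = 0"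
    using C0 C1 C2 C3 C4 sn by simp_all
qed


lemma dB_eq: "dB = 5/2 - 2*dA" by (simp add: dA_def dB_def)
lemma dA_quad: "4*dA^2 - 10*dA + 5 = 0"
  using quad by (simp add: dA_def power2_eq_square algebra_simps)

lemma all_equal:
  fixes t :: "nat \<Rightarrow> real" and H :: "nat \<Rightarrow> real"
  assumes H: "\<forall>l<5. H l = t l * dA + t (Suc l mod 5) * dB"
    and cl: "t 0 * dA - t 4 * dA + t 1 * dB - t 3 * dB = 0" "t 1 * dA - t 0 * dA + t 2 * dB - t 4 * dB = 0" "t 2 * dA - t 1 * dA + t 3 * dB - t 0 * dB = 0" "t 3 * dA - t 2 * dA + t 4 * dB - t 1 * dB = 0" "t 4 * dA - t 3 * dA + t 0 * dB - t 2 * dB = 0"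
    and i: "i < 5"
    and h: "\<forall>l<5. l \<noteq> i \<and> l \<noteq> Suc i mod 5 \<longrightarrow> H l \<le> H i \<and> H l \<le> H (Suc i mod 5)"
  shows "\<forall>k<5. t k = t 0"
proof -
  note cc = core[OF dA_pos dB_eq dB_pos dA_quad]
  have m0: "Suc 0 mod 5 = (1::nat)" by simp
  have m1: "Suc 1 mod 5 = (2::nat)" by simp
  have m2: "Suc 2 mod 5 = (3::nat)" by simp
  have m3: "Suc 3 mod 5 = (4::nat)" by simp
  have m4: "Suc 4 mod 5 = (0::nat)" by simp
  have H0: "H 0 = t 0 * dA + t 1 * dB" using H[rule_format, of 0] unfolding m0 by simp
  have H1: "H 1 = t 1 * dA + t 2 * dB" using H[rule_format, of 1] unfolding m1 by simp
  have H2: "H 2 = t 2 * dA + t 3 * dB" using H[rule_format, of 2] unfolding m2 by simp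
  have H3: "H 3 = t 3 * dA + t 4 * dB" using H[rule_format, of 3] unfolding m3 by simp
  have H4: "H 4 = t 4 * dA + t 0 * dB" using H[rule_format, of 4] unfolding m4 by simp
  note H5 = H0 H1 H2 H3 H4
  have "i = 0 \<or> i = 1 \<or> i = 2 \<or> i = 3 \<or> i = 4" using i by auto
  then show ?thesis
  proof (elim disjE)
    assume iI: "i = 0"
    have hh: "H 2 \<le> H 0 \<and> H 2 \<le> H 1" "H 3 \<le> H 0 \<and> H 3 \<le> H 1" "H 4 \<le> H 0 \<and> H 4 \<le> H 1"
      using h[rule_format, of 2] h[rule_format, of 3] h[rule_format, of 4] unfolding iI m0 by simp_all
    have "t 1 = t 0 \<and> t 2 = t 0 \<and> t 3 = t 0 \<and> t 4 = t 0"
    proof (rule cc)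
    qed (use cl hh H5 in linarith)+
    thus ?thesis by (auto simp: all5)
  next
    assume iI: "i = 1"
    have hh: "H 3 \<le> H 1 \<and> H 3 \<le> H 2" "H 4 \<le> H 1 \<and> H 4 \<le> H 2" "H 0 \<le> H 1 \<and> H 0 \<le> H 2"
      using h[rule_format, of 3] h[rule_format, of 4] h[rule_format, of 0] unfolding iI m1 by simp_all
    have "t 2 = t 1 \<and> t 3 = t 1 \<and> t 4 = t 1 \<and> t 0 = t 1"
    proof (rule cc)
    qed (use cl hh H5 in linarith)+
    thus ?thesis by (auto simp: all5)
  next
    assume iI: "i = 2"
    have hh: "H 4 \<le> H 2 \<and> H 4 \<le> H 3" "H 0 \<le> H 2 \<and> H 0 \<le> H 3" "H 1 \<le> H 2 \<and> H 1 \<le> H 3"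
      using h[rule_format, of 4] h[rule_format, of 0] h[rule_format, of 1] unfolding iI m2 by simp_all
    have "t 3 = t 2 \<and> t 4 = t 2 \<and> t 0 = t 2 \<and> t 1 = t 2"
    proof (rule cc)
    qed (use cl hh H5 in linarith)+
    thus ?thesis by (auto simp: all5)
  next
    assume iI: "i = 3"
    have hh: "H 0 \<le> H 3 \<and> H 0 \<le> H 4" "H 1 \<le> H 3 \<and> H 1 \<le> H 4" "H 2 \<le> H 3 \<and> H 2 \<le> H 4"
      using h[rule_format, of 0] h[rule_format, of 1] h[rule_format, of 2] unfolding iI m3 by simp_all
    have "t 4 = t 3 \<and> t 0 = t 3 \<and> t 1 = t 3 \<and> t 2 = t 3"
    proof (rule cc)
    qed (use cl hh H5 in linarith)+
    thus ?thesis by (auto simp: all5)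
  next
    assume iI: "i = 4"
    have hh: "H 1 \<le> H 4 \<and> H 1 \<le> H 0" "H 2 \<le> H 4 \<and> H 2 \<le> H 0" "H 3 \<le> H 4 \<and> H 3 \<le> H 0"
      using h[rule_format, of 1] h[rule_format, of 2] h[rule_format, of 3] unfolding iI m4 by simp_all
    have "t 0 = t 4 \<and> t 1 = t 4 \<and> t 2 = t 4 \<and> t 3 = t 4"
    proof (rule cc)
    qed (use cl hh H5 in linarith)+
    thus ?thesis by (auto simp: all5)
  qed
qed


lemma chain_vec:
  fixes a b c x y z :: "real^2"
  shows "a = b + r *\<^sub>R (x - y) \<Longrightarrow> b = c + r *\<^sub>R (y - z) \<Longrightarrow> a = c + r *\<^sub>R (x - z)"
  by (simp add: algebra_simps)

lemma vec_rot1: "vector [cos (pi/2 + x), sin (pi/2 + x)] = (vector [- sin x, cos x] :: real^2)"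
  by (simp add: cos_add sin_add)

lemma vec_rot2: "vector [cos (-(pi/2) + x), sin (-(pi/2) + x)] = - (vector [- sin x, cos x] :: real^2)"
  by (simp add: vec_eq_iff forall_2 cos_add sin_add cos_diff sin_diff)

lemma vec_rot3: "vector [cos (x - pi/2), sin (x - pi/2)] = - (vector [- sin x, cos x] :: real^2)"
  by (simp add: vec_eq_iff forall_2 cos_diff sin_diff)

theorem lemma9:
  fixes P :: "(real^2) set" and i j :: nat
  assumes "parallel_pentagon P"
    and "i < 5" and "j < 5"
    and "j = Suc i mod 5 \<or> i = Suc j mod 5"
    and "\<forall>l<5. l \<noteq> i \<and> l \<noteq> j \<longrightarrow> height P l \<le> height P i \<and> height P l \<le> height P j"
  shows "regular_pentagon P"
proof -
  obtain p :: "nat \<Rightarrow> real^2" and t :: "nat \<Rightarrow> real" and s :: real where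
    s: "s = 1 \<or> s = -1" and
    e: "\<forall>k<5. t k > 0 \<and> p (Suc k mod 5) - p k = (s * t k) *\<^sub>R (vK (Suc k mod 5) - vK k)" and
    P: "P = convex hull (p ` {..<5})"
    using assms(1) unfolding parallel_pentagon_def by blast
  have H: "\<forall>l<5. height P l = t l * dA + t (Suc l mod 5) * dB"
    using heights[OF s e P] by blast
  note cl = closure[OF s e]
  have teq: "\<forall>k<5. t k = t 0"
  proof (cases "j = Suc i mod 5")
    case True
    show ?thesis
      by (rule all_equal[OF H cl assms(2)]) (use assms(5) True in auto)
  next
    case False
    hence ij: "i = Suc j mod 5" using assms(4) by blast
    show ?thesis
      by (rule all_equal[OF H cl assms(3)]) (use assms(5) ij in auto)
  qed
  define T where "T = t 0"
  have T: "0 < T" using e unfolding T_def by auto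
  have ed: "p (Suc k mod 5) = p k + (s * T) *\<^sub>R (vK (Suc k mod 5) - vK k)" if "k<5" for k
    using e teq that unfolding T_def by (metis diff_add_cancel add.commute)
  have mm: "Suc 0 mod 5 = (1::nat)" "Suc 1 mod 5 = (2::nat)" "Suc 2 mod 5 = (3::nat)" "Suc 3 mod 5 = (4::nat)" by simp_all
  have p1: "p 1 = p 0 + (s * T) *\<^sub>R (vK 1 - vK 0)" using ed[of 0] unfolding mm by simp
  have p2: "p 2 = p 0 + (s * T) *\<^sub>R (vK 2 - vK 0)"
  proof -
    have "p 2 = p 1 + (s * T) *\<^sub>R (vK 2 - vK 1)" using ed[of 1] unfolding mm by simp
    thus ?thesis using p1 by (rule chain_vec)
  qed
  have p3: "p 3 = p 0 + (s * T) *\<^sub>R (vK 3 - vK 0)"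
  proof -
    have "p 3 = p 2 + (s * T) *\<^sub>R (vK 3 - vK 2)" using ed[of 2] unfolding mm by simp
    thus ?thesis using p2 by (rule chain_vec)
  qed
  have p4: "p 4 = p 0 + (s * T) *\<^sub>R (vK 4 - vK 0)"
  proof -
    have "p 4 = p 3 + (s * T) *\<^sub>R (vK 4 - vK 3)" using ed[of 3] unfolding mm by simp
    thus ?thesis using p3 by (rule chain_vec)
  qed
  define c where "c = p 0 - (s * T) *\<^sub>R vK 0"
  have pk: "p k = c + (s * T) *\<^sub>R vK k" if "k<5" for k
  proof -
    have "k = 0 \<or> k = 1 \<or> k = 2 \<or> k = 3 \<or> k = 4" using that by auto
    thus ?thesis using p1 p2 p3 p4 unfolding c_def by (auto simp: algebra_simps)
  qed
  define \<theta> where "\<theta> = (if s = 1 then pi/2 else -(pi/2))"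
  have vk: "vector [cos (\<theta> + 2 * pi * real k / 5), sin (\<theta> + 2 * pi * real k / 5)] = s *\<^sub>R vK k" for k
    using s unfolding \<theta>_def vK_def by (auto simp: vec_rot1 vec_rot2 vec_rot3)
  have img: "(\<lambda>k. c + T *\<^sub>R vector [cos (\<theta> + 2 * pi * real k / 5), sin (\<theta> + 2 * pi * real k / 5)]) ` {..<5} = p ` {..<5}"
    by (rule image_cong) (auto simp: vk pk)
  show ?thesis
    unfolding regular_pentagon_def
    by (rule exI[of _ c], rule exI[of _ T], rule exI[of _ \<theta>]) (use T img P in simp)
qed

end
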